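(* Let $c\ge 0$ be a real number, $q$ a positive integer, and $(e_n)_{n\ge q}$ a sequence of real numbers such that $$e_n\le c+\frac1n\sum_{u=q}^{n-1}e_u\quad\text{for all } n\ge q.$$ Then $e_n\le c\log(en/q)$ for all $n\ge q$ (here $e$ inside the logarithm is Euler's number). *)

theory Defs
  imports Complex_Main
begin

end

theory Submission
  imports Defs
begin

lemma aux_step:
  fixes n :: nat assumes "n > 0"
  shows "1 / real (Suc n) \<le> ln (real (Suc n)) - ln (real n)"
proof -
  have "ln (real n / real (Suc n)) \<le> real n / real (Suc n) - 1"
    using assms by (intro ln_le_minus_one) auto
  moreover have "ln (real n / real (Suc n)) = ln (real n) - ln (real (Suc n))"
    using assms by (simp add: ln_div)
  moreover have "real n / real (Suc n) - 1 = - 1 / real (Suc n)"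
    by (simp add: field_simps)
  ultimately show ?thesis by simp
qed

lemma aux_sum:
  fixes q n :: nat assumes "q > 0" "q \<le> n"
  shows "(\<Sum>u = q..<n. 1 + ln (real u) - ln (real q)) \<le> real n * (ln (real n) - ln (real q))"
  using assms(2)
proof (induction n rule: dec_induct)
  case base then show ?case by simp
next
  case (step m)
  have m0: "m > 0" using step assms by auto
  have a: "1 \<le> real (Suc m) * (ln (real (Suc m)) - ln (real m))"
    using aux_step[OF m0] by (simp add: field_simps)
  have "(\<Sum>u = q..<Suc m. 1 + ln (real u) - ln (real q))
      = (\<Sum>u = q..<m. 1 + ln (real u) - ln (real q)) + (1 + ln (real m) - ln (real q))"
    using step by simp
  also have "\<dots> \<le> real m * (ln (real m) - ln (real q)) + (1 + ln (real m) - ln (real q))"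
    using step by simp
  also have "\<dots> \<le> real (Suc m) * (ln (real (Suc m)) - ln (real q))"
    using a by (simp add: algebra_simps)
  finally show ?case .
qed

theorem lemma2p1:
  fixes c :: real and q :: nat and e :: "nat \<Rightarrow> real"
  assumes "c \<ge> 0" and "q > 0"
    and "\<And>n. n \<ge> q \<Longrightarrow> e n \<le> c + (1 / real n) * (\<Sum>u = q..<n. e u)"
  shows "\<And>n. n \<ge> q \<Longrightarrow> e n \<le> c * ln (exp 1 * real n / real q)"
proof -
  have L: "ln (exp 1 * real n / real q) = 1 + ln (real n) - ln (real q)" if "n \<ge> q" for n
    using that assms(2) by (simp add: ln_div ln_mult)
  have main: "e n \<le> c * (1 + ln (real n) - ln (real q))" if "n \<ge> q" for n
    using that
  proof (induction n rule: less_induct)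
    case (less n)
    have n0: "real n > 0" using less.prems assms(2) by simp
    have "(\<Sum>u = q..<n. e u) \<le> (\<Sum>u = q..<n. c * (1 + ln (real u) - ln (real q)))"
      by (intro sum_mono less.IH) auto
    also have "\<dots> = c * (\<Sum>u = q..<n. 1 + ln (real u) - ln (real q))"
      by (simp add: sum_distrib_left)
    also have "\<dots> \<le> c * (real n * (ln (real n) - ln (real q)))"
      using aux_sum[OF assms(2) less.prems] assms(1) by (intro mult_left_mono) auto
    finally have s: "(1 / real n) * (\<Sum>u = q..<n. e u) \<le> c * (ln (real n) - ln (real q))"
      using n0 by (simp add: field_simps)
    show ?case using assms(3)[OF less.prems] s by (simp add: algebra_simps)
  qed
  fix n assume "n \<ge> q"
  then show "e n \<le> c * ln (exp 1 * real n / real q)" using main L by simp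
qed

end
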